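(* Let $\Delta\ge 41$ be an integer and $k=\lceil 27\Delta\ln\Delta\rceil$. If $G$ is a graph with maximum degree $\Delta$ and $Y$ is an independent set of vertices in $G$, then the set $E_G(Y,V(G)\setminus Y)$ of edges with one end in $Y$ and the other in $V(G)\setminus Y$ can be partitioned into $k$ $G$-good sets.
   Context: All graphs are finite and simple; $\ln$ is the natural logarithm. A set $F$ of edges of $G$ is \emph{$G$-good} if no two distinct edges $e,f\in F$ satisfy either (i) $e$ and $f$ share no vertex and some edge of $G$ joins an endpoint of $e$ to an endpoint of $f$, or (ii) $e$ and $f$ lie in a common triangle of $G$. (A partition into $k$ sets may have some empty parts.) *)

theory Defs
  imports Complex_Main
begin

definition simple_graph :: "'a set \<Rightarrow> 'a set set \<Rightarrow> bool" where
  "simple_graph V E \<longleftrightarrow> finite V \<and> (\<forall>e\<in>E. e \<subseteq> V \<and> card e = 2)"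

definition degree :: "'a set set \<Rightarrow> 'a \<Rightarrow> nat" where
  "degree E v = card {e\<in>E. v \<in> e}"

definition max_degree :: "'a set \<Rightarrow> 'a set set \<Rightarrow> nat" where
  "max_degree V E = Max (degree E ` V)"

definition independent_set :: "'a set \<Rightarrow> 'a set set \<Rightarrow> 'a set \<Rightarrow> bool" where
  "independent_set V E Y \<longleftrightarrow> Y \<subseteq> V \<and> (\<forall>x\<in>Y. \<forall>y\<in>Y. {x, y} \<notin> E)"

definition cut_edges :: "'a set \<Rightarrow> 'a set set \<Rightarrow> 'a set \<Rightarrow> 'a set set" where
  "cut_edges V E Y = {e\<in>E. \<exists>y\<in>Y. \<exists>x\<in>V - Y. e = {y, x}}"

definition triangle :: "'a set set \<Rightarrow> 'a \<Rightarrow> 'a \<Rightarrow> 'a \<Rightarrow> bool" where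
  "triangle E a b c \<longleftrightarrow> {a, b} \<in> E \<and> {b, c} \<in> E \<and> {a, c} \<in> E"

definition good_set :: "'a set set \<Rightarrow> 'a set set \<Rightarrow> bool" where
  "good_set E F \<longleftrightarrow> F \<subseteq> E \<and>
     (\<forall>e\<in>F. \<forall>f\<in>F. e \<noteq> f \<longrightarrow>
        \<not> ((e \<inter> f = {} \<and> (\<exists>x\<in>e. \<exists>y\<in>f. {x, y} \<in> E)) \<or>
           (\<exists>a b c. triangle E a b c \<and> e \<subseteq> {a, b, c} \<and> f \<subseteq> {a, b, c})))"

end

theory Submission
  imports Defs "HOL-Library.FuncSet"
begin


definition dep :: "'c set \<Rightarrow> 'r set \<Rightarrow> 'c set \<Rightarrow> ('c \<Rightarrow> 'r) set \<Rightarrow> bool" where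
  "dep C R S A \<longleftrightarrow> (\<forall>w\<in>PiE C (\<lambda>_. R). \<forall>w'\<in>PiE C (\<lambda>_. R).
      (\<forall>c\<in>S. w c = w' c) \<longrightarrow> (w \<in> A \<longleftrightarrow> w' \<in> A))"

lemma split_card:
  assumes "finite C" "S \<subseteq> C"
  shows "card {w \<in> PiE C (\<lambda>_. R). restrict w S \<in> P \<and> restrict w (C - S) \<in> Q}
       = card (P \<inter> PiE S (\<lambda>_. R)) * card (Q \<inter> PiE (C - S) (\<lambda>_. R))"
proof -
  let ?f = "\<lambda>w. (restrict w S, restrict w (C - S))"
  let ?g = "\<lambda>(s, u). (\<lambda>c. if c \<in> S then s c else u c)"
  have "bij_betw ?f {w \<in> PiE C (\<lambda>_. R). restrict w S \<in> P \<and> restrict w (C - S) \<in> Q}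
     ((P \<inter> PiE S (\<lambda>_. R)) \<times> (Q \<inter> PiE (C - S) (\<lambda>_. R)))"
  proof (rule bij_betw_byWitness[where f' = ?g])
    show "\<forall>a\<in>{w \<in> PiE C (\<lambda>_. R). restrict w S \<in> P \<and> restrict w (C - S) \<in> Q}. ?g (?f a) = a"
      using assms by (auto simp: fun_eq_iff PiE_iff extensional_def)
    show "\<forall>a'\<in>(P \<inter> PiE S (\<lambda>_. R)) \<times> (Q \<inter> PiE (C - S) (\<lambda>_. R)). ?f (?g a') = a'"
      using assms by (auto simp: fun_eq_iff PiE_iff extensional_def)
    show "?f ` {w \<in> PiE C (\<lambda>_. R). restrict w S \<in> P \<and> restrict w (C - S) \<in> Q}
       \<subseteq> (P \<inter> PiE S (\<lambda>_. R)) \<times> (Q \<inter> PiE (C - S) (\<lambda>_. R))"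
      using assms by (force simp: restrict_PiE_iff)
    show "?g ` ((P \<inter> PiE S (\<lambda>_. R)) \<times> (Q \<inter> PiE (C - S) (\<lambda>_. R)))
       \<subseteq> {w \<in> PiE C (\<lambda>_. R). restrict w S \<in> P \<and> restrict w (C - S) \<in> Q}"
    proof
      fix w assume "w \<in> ?g ` ((P \<inter> PiE S (\<lambda>_. R)) \<times> (Q \<inter> PiE (C - S) (\<lambda>_. R)))"
      then obtain s u where su: "s \<in> P" "s \<in> PiE S (\<lambda>_. R)" "u \<in> Q" "u \<in> PiE (C - S) (\<lambda>_. R)"
        and w: "w = ?g (s, u)" by auto
      have r1: "restrict w S = s" using su w by (auto simp: fun_eq_iff PiE_iff extensional_def)
      have r2: "restrict w (C - S) = u" using su w by (auto simp: fun_eq_iff PiE_iff extensional_def)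
      have "w \<in> PiE C (\<lambda>_. R)" using su w assms by (auto simp: PiE_iff extensional_def)
      then show "w \<in> {w \<in> PiE C (\<lambda>_. R). restrict w S \<in> P \<and> restrict w (C - S) \<in> Q}"
        using r1 r2 su by auto
    qed
  qed
  then show ?thesis by (simp add: bij_betw_same_card card_cartesian_product)
qed


lemma dep_char:
  assumes "A \<subseteq> PiE C (\<lambda>_. R)" "dep C R S A"
  shows "A = {w \<in> PiE C (\<lambda>_. R). restrict w S \<in> (\<lambda>w. restrict w S) ` A}"
proof
  show "A \<subseteq> {w \<in> PiE C (\<lambda>_. R). restrict w S \<in> (\<lambda>w. restrict w S) ` A}" using assms(1) by auto
  show "{w \<in> PiE C (\<lambda>_. R). restrict w S \<in> (\<lambda>w. restrict w S) ` A} \<subseteq> A"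
  proof
    fix w assume "w \<in> {w \<in> PiE C (\<lambda>_. R). restrict w S \<in> (\<lambda>w. restrict w S) ` A}"
    then obtain w' where w: "w \<in> PiE C (\<lambda>_. R)" "w' \<in> A" "restrict w S = restrict w' S" by auto
    then have "\<forall>c\<in>S. w c = w' c" by (metis restrict_apply')
    with w assms show "w \<in> A" unfolding dep_def by blast
  qed
qed

lemma dep_mono: "dep C R S A \<Longrightarrow> S \<subseteq> T \<Longrightarrow> dep C R T A"
  unfolding dep_def by blast

lemma indep_card:
  assumes "finite C" "A \<subseteq> PiE C (\<lambda>_. R)" "B \<subseteq> PiE C (\<lambda>_. R)"
    "dep C R S A" "dep C R T B" "S \<subseteq> C" "T \<subseteq> C" "S \<inter> T = {}"
  shows "card (A \<inter> B) * card (PiE C (\<lambda>_. R)) = card A * card B"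
proof -
  let ?U = "C - S"
  have dB: "dep C R ?U B" using dep_mono[OF assms(5)] assms(7,8) by blast
  define PA where "PA = (\<lambda>w. restrict w S) ` A"
  define PB where "PB = (\<lambda>w. restrict w ?U) ` B"
  have A: "A = {w \<in> PiE C (\<lambda>_. R). restrict w S \<in> PA}" using dep_char[OF assms(2,4)] PA_def by simp
  have B: "B = {w \<in> PiE C (\<lambda>_. R). restrict w ?U \<in> PB}" using dep_char[OF assms(3) dB] PB_def by simp
  have AB: "A \<inter> B = {w \<in> PiE C (\<lambda>_. R). restrict w S \<in> PA \<and> restrict w ?U \<in> PB}"
    using A B by blast
  have A': "A = {w \<in> PiE C (\<lambda>_. R). restrict w S \<in> PA \<and> restrict w ?U \<in> UNIV}" using A by simp
  have B': "B = {w \<in> PiE C (\<lambda>_. R). restrict w S \<in> UNIV \<and> restrict w ?U \<in> PB}" using B by simp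
  have O: "PiE C (\<lambda>_. R) = {w \<in> PiE C (\<lambda>_. R). restrict w S \<in> UNIV \<and> restrict w ?U \<in> UNIV}" by simp
  have c1: "card (A \<inter> B) = card (PA \<inter> PiE S (\<lambda>_. R)) * card (PB \<inter> PiE ?U (\<lambda>_. R))"
    unfolding AB by (rule split_card[OF assms(1,6)])
  have c2: "card A = card (PA \<inter> PiE S (\<lambda>_. R)) * card (UNIV \<inter> PiE ?U (\<lambda>_. R))"
    using split_card[OF assms(1,6), where P=PA and Q=UNIV] A' by simp
  have c3: "card B = card (UNIV \<inter> PiE S (\<lambda>_. R)) * card (PB \<inter> PiE ?U (\<lambda>_. R))"
    using split_card[OF assms(1,6), where P=UNIV and Q=PB] B' by simp
  have c4: "card (PiE C (\<lambda>_. R)) = card (UNIV \<inter> PiE S (\<lambda>_. R)) * card (UNIV \<inter> PiE ?U (\<lambda>_. R))"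
    using split_card[OF assms(1,6), where P=UNIV and Q=UNIV] by simp
  show ?thesis unfolding c1 c2 c3 c4 by (simp add: ac_simps)
qed


lemma lll:
  fixes C :: "'c set" and R :: "'r set" and I :: "'i set"
    and A :: "'i \<Rightarrow> ('c \<Rightarrow> 'r) set" and sp :: "'i \<Rightarrow> 'c set" and p :: real and d :: nat
  assumes finC: "finite C" and finR: "finite R" and neR: "R \<noteq> {}" and finI: "finite I"
    and ev: "\<And>i. i \<in> I \<Longrightarrow> A i \<subseteq> PiE C (\<lambda>_. R) \<and> sp i \<subseteq> C \<and> dep C R (sp i) (A i)"
    and pr: "\<And>i. i \<in> I \<Longrightarrow> real (card (A i)) \<le> p * real (card (PiE C (\<lambda>_. R)))"
    and dg: "\<And>i. i \<in> I \<Longrightarrow> card {j\<in>I. sp j \<inter> sp i \<noteq> {}} \<le> d"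
    and pd: "4 * p * d \<le> 1" and p0: "p \<ge> 0" and d1: "d \<ge> 1"
  shows "\<exists>w\<in>PiE C (\<lambda>_. R). \<forall>i\<in>I. w \<notin> A i"
proof -
  define \<Omega> where "\<Omega> = PiE C (\<lambda>_. R)"
  define Q where "Q S = {w\<in>\<Omega>. \<forall>j\<in>S. w \<notin> A j}" for S
  have finO: "finite \<Omega>" unfolding \<Omega>_def using finC finR by (simp add: finite_PiE)
  have neO: "\<Omega> \<noteq> {}" unfolding \<Omega>_def using neR by (simp add: PiE_eq_empty_iff)
  have cO: "card \<Omega> > 0" using finO neO by (simp add: card_gt_0_iff)
  have QO: "Q S \<subseteq> \<Omega>" for S unfolding Q_def by auto
  have depQ: "dep C R (\<Union>j\<in>S. sp j) (Q S)" if "S \<subseteq> I" for S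
    unfolding dep_def Q_def \<Omega>_def
  proof (intro ballI impI)
    fix w w' assume w: "w \<in> PiE C (\<lambda>_. R)" "w' \<in> PiE C (\<lambda>_. R)" and ag: "\<forall>c\<in>\<Union>j\<in>S. sp j. w c = w' c"
    have "\<forall>j\<in>S. (w \<in> A j \<longleftrightarrow> w' \<in> A j)"
    proof
      fix j assume j: "j \<in> S"
      then have "j \<in> I" using that by auto
      with ev have "dep C R (sp j) (A j)" by auto
      moreover have "\<forall>c\<in>sp j. w c = w' c" using ag j by auto
      ultimately show "w \<in> A j \<longleftrightarrow> w' \<in> A j" using w unfolding dep_def by blast
    qed
    then show "(w \<in> {w \<in> PiE C (\<lambda>_. R). \<forall>j\<in>S. w \<notin> A j}) = (w' \<in> {w \<in> PiE C (\<lambda>_. R). \<forall>j\<in>S. w \<notin> A j})"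
      using w by auto
  qed
  have spC: "(\<Union>j\<in>S. sp j) \<subseteq> C" if "S \<subseteq> I" for S using ev that by blast
  have p4: "p \<le> 1/4"
  proof -
    have "4 * p * 1 \<le> 4 * p * real d" using d1 p0 by (intro mult_left_mono) auto
    then show ?thesis using pd by linarith
  qed
  have main: "\<forall>S. S \<subseteq> I \<longrightarrow> card S = n \<longrightarrow>
      (0 < card (Q S) \<and> (\<forall>i\<in>I - S. real (card (A i \<inter> Q S)) \<le> 2 * p * real (card (Q S))))" for n
  proof (induction n rule: less_induct)
    case (less n)
    show ?case
    proof (intro allI impI conjI)
      fix S assume SI: "S \<subseteq> I" and cS: "card S = n"
      have finS: "finite S" using SI finI finite_subset by blast
      show "0 < card (Q S)"
      proof (cases "S = {}")
        case True
        then have "Q S = \<Omega>" unfolding Q_def by auto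
        then show ?thesis using cO by simp
      next
        case False
        then obtain j where j: "j \<in> S" by auto
        define S' where "S' = S - {j}"
        have cS': "card S' < n" using j finS cS unfolding S'_def
          by (metis card_Diff1_less)
        have IH: "0 < card (Q S') \<and> real (card (A j \<inter> Q S')) \<le> 2 * p * real (card (Q S'))"
          using less.IH[OF cS', rule_format, of S'] SI j unfolding S'_def by auto
        have eq: "Q S = Q S' - (A j \<inter> Q S')" unfolding Q_def S'_def using j by auto
        have finQ: "finite (Q S')" using QO finO finite_subset by blast
        have "card (Q S) = card (Q S') - card (A j \<inter> Q S')"
          unfolding eq by (rule card_Diff_subset) (use finQ in auto)
        moreover have "card (A j \<inter> Q S') \<le> card (Q S')" using finQ by (simp add: card_mono)
        ultimately have "real (card (Q S)) = real (card (Q S')) - real (card (A j \<inter> Q S'))" by simp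
        also have "\<dots> \<ge> (1 - 2 * p) * real (card (Q S'))" using IH by (simp add: algebra_simps)
        finally have "real (card (Q S)) \<ge> (1 - 2 * p) * real (card (Q S'))" .
        moreover have "(1 - 2 * p) * real (card (Q S')) > 0" using IH p4 by simp
        ultimately show ?thesis by linarith
      qed
    next
      fix S assume SI: "S \<subseteq> I" and cS: "card S = n"
      have finS: "finite S" using SI finI finite_subset by blast
      show "\<forall>i\<in>I - S. real (card (A i \<inter> Q S)) \<le> 2 * p * real (card (Q S))"
      proof
        fix i assume i: "i \<in> I - S"
        define S1 where "S1 = {j\<in>S. sp j \<inter> sp i \<noteq> {}}"
        define S2 where "S2 = S - S1"
        have S2I: "S2 \<subseteq> I" using SI unfolding S2_def by auto
        have finQ: "finite (Q T)" for T using QO finO finite_subset by blast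
        have h1: "card (A i \<inter> Q S) \<le> card (A i \<inter> Q S2)"
          by (rule card_mono) (use finQ S2_def Q_def in auto)
        have disj: "sp i \<inter> (\<Union>j\<in>S2. sp j) = {}" unfolding S2_def S1_def by auto
        have h2: "card (A i \<inter> Q S2) * card \<Omega> = card (A i) * card (Q S2)"
          unfolding \<Omega>_def
          by (rule indep_card[OF finC _ _ _ depQ[OF S2I] _ spC[OF S2I] disj])
             (use ev i QO \<Omega>_def in auto)
        have h3: "real (card (A i \<inter> Q S2)) \<le> p * real (card (Q S2))"
        proof -
          have "real (card (A i \<inter> Q S2)) * real (card \<Omega>) = real (card (A i)) * real (card (Q S2))"
            using h2 by (metis of_nat_mult)
          also have "\<dots> \<le> p * real (card \<Omega>) * real (card (Q S2))"
            using pr[of i] i unfolding \<Omega>_def by (simp add: mult_right_mono)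
          finally show ?thesis using cO by (simp add: algebra_simps)
        qed
        have h4: "Q S2 \<subseteq> Q S \<union> (\<Union>j\<in>S1. A j \<inter> Q S2)"
          unfolding Q_def S2_def by auto
        have finS1: "finite S1" using finS unfolding S1_def by auto
        have h5: "card (Q S2) \<le> card (Q S) + (\<Sum>j\<in>S1. card (A j \<inter> Q S2))"
        proof -
          have "card (Q S2) \<le> card (Q S \<union> (\<Union>j\<in>S1. A j \<inter> Q S2))"
            by (rule card_mono) (use finQ finS1 h4 in auto)
          also have "\<dots> \<le> card (Q S) + card (\<Union>j\<in>S1. A j \<inter> Q S2)" by (rule card_Un_le)
          also have "\<dots> \<le> card (Q S) + (\<Sum>j\<in>S1. card (A j \<inter> Q S2))"
            using card_UN_le[OF finS1, of "\<lambda>j. A j \<inter> Q S2"] by linarith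
          finally show ?thesis .
        qed
        show "real (card (A i \<inter> Q S)) \<le> 2 * p * real (card (Q S))"
        proof (cases "S1 = {}")
          case True
          then have "S2 = S" unfolding S2_def by simp
          have "real (card (A i \<inter> Q S)) \<le> real (card (A i \<inter> Q S2))" using h1 by simp
          also have "\<dots> \<le> p * real (card (Q S2))" by (rule h3)
          also have "\<dots> \<le> 2 * p * real (card (Q S))" using \<open>S2 = S\<close> p0 by simp
          finally show ?thesis .
        next
          case False
          have "S2 \<subset> S" using False unfolding S2_def S1_def by blast
          then have cS2: "card S2 < n" using finS cS psubset_card_mono by blast
          have IH: "real (card (A j \<inter> Q S2)) \<le> 2 * p * real (card (Q S2))" if "j \<in> S1" for j
          proof -
            have "j \<in> I - S2" using that SI unfolding S2_def S1_def by auto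
            then show ?thesis using less.IH[OF cS2, rule_format, of S2] S2I by auto
          qed
          have cS1: "card S1 \<le> d"
          proof -
            have "card S1 \<le> card {j\<in>I. sp j \<inter> sp i \<noteq> {}}"
              by (rule card_mono) (use finI SI S1_def in auto)
            moreover have "card {j\<in>I. sp j \<inter> sp i \<noteq> {}} \<le> d" using dg i by blast
            ultimately show ?thesis by linarith
          qed
          have "real (card (Q S2)) \<le> real (card (Q S)) + (\<Sum>j\<in>S1. real (card (A j \<inter> Q S2)))"
            using h5 by (metis of_nat_add of_nat_mono of_nat_sum)
          also have "(\<Sum>j\<in>S1. real (card (A j \<inter> Q S2))) \<le> (\<Sum>j\<in>S1. 2 * p * real (card (Q S2)))"
            by (rule sum_mono) (use IH in auto)
          also have "\<dots> = real (card S1) * (2 * p * real (card (Q S2)))" by simp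
          also have "\<dots> \<le> real d * (2 * p * real (card (Q S2)))"
            using cS1 p0 by (intro mult_right_mono) auto
          finally have "real (card (Q S2)) \<le> real (card (Q S)) + real d * (2 * p * real (card (Q S2)))"
            by simp
          moreover have "real d * (2 * p * real (card (Q S2))) \<le> 1/2 * real (card (Q S2))"
          proof -
            have "(4 * p * real d) * real (card (Q S2)) \<le> 1 * real (card (Q S2))"
              using pd by (intro mult_right_mono) auto
            then show ?thesis by (simp add: algebra_simps)
          qed
          ultimately have "real (card (Q S2)) \<le> 2 * real (card (Q S))" by linarith
          have "real (card (A i \<inter> Q S)) \<le> real (card (A i \<inter> Q S2))" using h1 by simp
          also have "\<dots> \<le> p * real (card (Q S2))" by (rule h3)
          also have "\<dots> \<le> p * (2 * real (card (Q S)))"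
            using \<open>real (card (Q S2)) \<le> 2 * real (card (Q S))\<close> p0 by (rule mult_left_mono)
          finally show ?thesis by simp
        qed
      qed
    qed
  qed
  have "0 < card (Q I)" using main[of "card I"] by auto
  then obtain w where "w \<in> Q I" by (metis card.empty less_irrefl ex_in_conv)
  then show ?thesis unfolding Q_def \<Omega>_def by auto
qed



lemma bij_betw_Collect:
  assumes "bij_betw T O1 O2"
  shows "bij_betw T {w\<in>O1. P (T w)} {v\<in>O2. P v}"
proof -
  have i: "inj_on T O1" and im: "T ` O1 = O2" using assms unfolding bij_betw_def by auto
  have "inj_on T {w\<in>O1. P (T w)}" by (rule inj_on_subset[OF i]) blast
  moreover have "T ` {w\<in>O1. P (T w)} = {v\<in>O2. P v}"
  proof
    show "T ` {w\<in>O1. P (T w)} \<subseteq> {v\<in>O2. P v}" using im by blast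
    show "{v\<in>O2. P v} \<subseteq> T ` {w\<in>O1. P (T w)}"
    proof
      fix v assume "v \<in> {v\<in>O2. P v}"
      then obtain w where "w \<in> O1" "v = T w" "P v" using im by blast
      then show "v \<in> T ` {w\<in>O1. P (T w)}" by blast
    qed
  qed
  ultimately show ?thesis unfolding bij_betw_def by blast
qed

lemma transpose_bij:
  "bij_betw (\<lambda>w. \<lambda>i\<in>K. \<lambda>z\<in>X. w z i) (PiE X (\<lambda>_. PiE K (\<lambda>_. R))) (PiE K (\<lambda>_. PiE X (\<lambda>_. R)))"
proof (rule bij_betw_byWitness[where f' = "\<lambda>v. \<lambda>z\<in>X. \<lambda>i\<in>K. v i z"])
  show "\<forall>a\<in>PiE X (\<lambda>_. PiE K (\<lambda>_. R)). (\<lambda>z\<in>X. \<lambda>i\<in>K. (\<lambda>i\<in>K. \<lambda>z\<in>X. a z i) i z) = a"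
  proof
    fix a assume a: "a \<in> PiE X (\<lambda>_. PiE K (\<lambda>_. R))"
    show "(\<lambda>z\<in>X. \<lambda>i\<in>K. (\<lambda>i\<in>K. \<lambda>z\<in>X. a z i) i z) = a"
    proof (rule ext)
      fix z show "(\<lambda>z\<in>X. \<lambda>i\<in>K. (\<lambda>i\<in>K. \<lambda>z\<in>X. a z i) i z) z = a z"
      proof (cases "z \<in> X")
        case True
        have "a z \<in> PiE K (\<lambda>_. R)" using a True by (rule PiE_mem)
        then have "restrict (a z) K = a z" by (rule PiE_restrict)
        moreover have "(\<lambda>i\<in>K. (\<lambda>i\<in>K. \<lambda>z\<in>X. a z i) i z) = restrict (a z) K"
          by (intro restrict_ext) (simp add: True)
        ultimately show ?thesis using True by (metis restrict_apply')
      next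
        case False
        have "a z = undefined" using a False by (rule PiE_arb)
        then show ?thesis using False by simp
      qed
    qed
  qed
  show "\<forall>a'\<in>PiE K (\<lambda>_. PiE X (\<lambda>_. R)). (\<lambda>i\<in>K. \<lambda>z\<in>X. (\<lambda>z\<in>X. \<lambda>i\<in>K. a' i z) z i) = a'"
  proof
    fix a assume a: "a \<in> PiE K (\<lambda>_. PiE X (\<lambda>_. R))"
    show "(\<lambda>i\<in>K. \<lambda>z\<in>X. (\<lambda>z\<in>X. \<lambda>i\<in>K. a i z) z i) = a"
    proof (rule ext)
      fix i show "(\<lambda>i\<in>K. \<lambda>z\<in>X. (\<lambda>z\<in>X. \<lambda>i\<in>K. a i z) z i) i = a i"
      proof (cases "i \<in> K")
        case True
        have "a i \<in> PiE X (\<lambda>_. R)" using a True by (rule PiE_mem)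
        then have "restrict (a i) X = a i" by (rule PiE_restrict)
        moreover have "(\<lambda>z\<in>X. (\<lambda>z\<in>X. \<lambda>i\<in>K. a i z) z i) = restrict (a i) X"
          by (intro restrict_ext) (simp add: True)
        ultimately show ?thesis using True by (metis restrict_apply')
      next
        case False
        have "a i = undefined" using a False by (rule PiE_arb)
        then show ?thesis using False by simp
      qed
    qed
  qed
  show "(\<lambda>w. \<lambda>i\<in>K. \<lambda>z\<in>X. w z i) ` PiE X (\<lambda>_. PiE K (\<lambda>_. R)) \<subseteq> PiE K (\<lambda>_. PiE X (\<lambda>_. R))"
  proof (rule image_subsetI)
    fix w assume w: "w \<in> PiE X (\<lambda>_. PiE K (\<lambda>_. R))"
    have "w z i \<in> R" if "z \<in> X" "i \<in> K" for z i using w that by (meson PiE_mem)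
    then show "(\<lambda>i\<in>K. \<lambda>z\<in>X. w z i) \<in> PiE K (\<lambda>_. PiE X (\<lambda>_. R))"
      by (simp add: restrict_PiE_iff)
  qed
  show "(\<lambda>v. \<lambda>z\<in>X. \<lambda>i\<in>K. v i z) ` PiE K (\<lambda>_. PiE X (\<lambda>_. R)) \<subseteq> PiE X (\<lambda>_. PiE K (\<lambda>_. R))"
  proof (rule image_subsetI)
    fix w assume w: "w \<in> PiE K (\<lambda>_. PiE X (\<lambda>_. R))"
    have "w i z \<in> R" if "z \<in> X" "i \<in> K" for z i using w that by (meson PiE_mem)
    then show "(\<lambda>z\<in>X. \<lambda>i\<in>K. w i z) \<in> PiE X (\<lambda>_. PiE K (\<lambda>_. R))"
      by (simp add: restrict_PiE_iff)
  qed
qed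

lemma event_card:
  fixes X D :: "'a set" and x :: 'a and k M :: nat
  assumes finX: "finite X" and DX: "D \<subseteq> X" and xD: "x \<in> D" and M2: "M \<ge> 2"
  shows "real (card {w\<in>PiE X (\<lambda>_. PiE {..<k} (\<lambda>_. {..<M})). \<forall>i<k. \<not> (w x i = 0 \<and> (\<forall>z\<in>D-{x}. w z i \<noteq> 0))})
       = (1 - real (M-1) ^ (card D - 1) / real M ^ card D) ^ k * real (card (PiE X (\<lambda>_. PiE {..<k} (\<lambda>_. {..<M}::nat set))))"
proof -
  let ?R = "{..<M}::nat set"
  let ?O = "PiE X (\<lambda>_. PiE {..<k} (\<lambda>_. ?R))"
  let ?O' = "PiE {..<k} (\<lambda>_. PiE X (\<lambda>_. ?R))"
  let ?T = "\<lambda>w. \<lambda>i\<in>{..<k}. \<lambda>z\<in>X. w z i"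
  define N where "N = {f\<in>PiE X (\<lambda>_. ?R). \<not> (f x = 0 \<and> (\<forall>z\<in>D-{x}. f z \<noteq> 0))}"
  have bT: "bij_betw ?T ?O ?O'" by (rule transpose_bij)
  have xX: "x \<in> X" using xD DX by auto
  have eqA: "{w\<in>?O. \<forall>i<k. \<not> (w x i = 0 \<and> (\<forall>z\<in>D-{x}. w z i \<noteq> 0))}
      = {w\<in>?O. (\<lambda>v. \<forall>i\<in>{..<k}. v i \<in> N) (?T w)}"
  proof (rule Collect_cong)
    fix w
    show "(w \<in> ?O \<and> (\<forall>i<k. \<not> (w x i = 0 \<and> (\<forall>z\<in>D-{x}. w z i \<noteq> 0)))) =
      (w \<in> ?O \<and> (\<lambda>v. \<forall>i\<in>{..<k}. v i \<in> N) (?T w))"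
    proof (cases "w \<in> ?O")
      case True
      have key: "((\<lambda>z\<in>X. w z i) \<in> N) = (\<not> (w x i = 0 \<and> (\<forall>z\<in>D-{x}. w z i \<noteq> 0)))" if "i < k" for i
      proof -
        have m: "(\<lambda>z\<in>X. w z i) \<in> PiE X (\<lambda>_. ?R)" using True that by (auto simp: PiE_iff)
        have e1: "(\<lambda>z\<in>X. w z i) x = w x i" using xX by simp
        have e2: "(\<forall>z\<in>D-{x}. (\<lambda>z\<in>X. w z i) z \<noteq> 0) = (\<forall>z\<in>D-{x}. w z i \<noteq> 0)"
          using DX by (simp add: subset_iff)
        show ?thesis unfolding N_def using m e1 e2 by (simp only: mem_Collect_eq) blast
      qed
      have "?T w i = (\<lambda>z\<in>X. w z i)" if "i < k" for i using that by simp
      then show ?thesis using key True by auto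
    qed simp
  qed
  have cA: "card {w\<in>?O. \<forall>i<k. \<not> (w x i = 0 \<and> (\<forall>z\<in>D-{x}. w z i \<noteq> 0))} = card {v\<in>?O'. \<forall>i\<in>{..<k}. v i \<in> N}"
    unfolding eqA by (rule bij_betw_same_card[OF bij_betw_Collect[OF bT]])
  have Nsub: "N \<subseteq> PiE X (\<lambda>_. ?R)" unfolding N_def by blast
  have "{v\<in>?O'. \<forall>i\<in>{..<k}. v i \<in> N} = PiE {..<k} (\<lambda>_. N)"
  proof
    show "{v\<in>?O'. \<forall>i\<in>{..<k}. v i \<in> N} \<subseteq> PiE {..<k} (\<lambda>_. N)"
      by (auto simp: PiE_iff extensional_def)
    show "PiE {..<k} (\<lambda>_. N) \<subseteq> {v\<in>?O'. \<forall>i\<in>{..<k}. v i \<in> N}"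
      using Nsub by (auto simp: PiE_iff extensional_def)
  qed
  then have cA2: "card {v\<in>?O'. \<forall>i\<in>{..<k}. v i \<in> N} = card N ^ k" by (simp add: card_PiE)
  have cO: "card ?O = (M ^ card X) ^ k"
  proof -
    have "card ?O = card ?O'" by (rule bij_betw_same_card[OF bT])
    also have "\<dots> = (M ^ card X) ^ k" using finX by (simp add: card_PiE)
    finally show ?thesis .
  qed
  define G where "G = PiE X (\<lambda>z. if z = x then {0} else if z \<in> D then ?R - {0} else ?R)"
  have Gc: "f \<in> G \<longleftrightarrow> f \<in> PiE X (\<lambda>_. ?R) \<and> f x = 0 \<and> (\<forall>z\<in>D-{x}. f z \<noteq> 0)" for f
  proof -
    have "(\<forall>z\<in>X. f z \<in> (if z = x then {0} else if z \<in> D then ?R - {0} else ?R)) \<longleftrightarrow>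
          (\<forall>z\<in>X. f z \<in> ?R) \<and> f x = 0 \<and> (\<forall>z\<in>D-{x}. f z \<noteq> 0)"
      using M2 xX DX by (auto split: if_splits)
    then show ?thesis unfolding G_def PiE_iff by blast
  qed
  have NG: "N = PiE X (\<lambda>_. ?R) - G" unfolding N_def using Gc by blast
  have GS: "G \<subseteq> PiE X (\<lambda>_. ?R)" using Gc by blast
  have cG: "card G = (M - 1) ^ (card D - 1) * M ^ (card X - card D)"
  proof -
    let ?h = "\<lambda>z. card (if z = x then {0} else if z \<in> D then ?R - {0} else ?R)"
    have "card G = (\<Prod>z\<in>X. ?h z)" unfolding G_def using finX by (simp add: card_PiE)
    also have "\<dots> = (\<Prod>z\<in>D. ?h z) * (\<Prod>z\<in>X - D. ?h z)"
      using finX DX by (metis (no_types, lifting) mult.commute prod.subset_diff)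
    also have "(\<Prod>z\<in>X - D. ?h z) = (\<Prod>z\<in>X - D. M)" by (rule prod.cong) (use xD in auto)
    also have "(\<Prod>z\<in>D. ?h z) = ?h x * (\<Prod>z\<in>D - {x}. ?h z)"
      using finX DX xD finite_subset by (intro prod.remove) auto
    also have "(\<Prod>z\<in>D - {x}. ?h z) = (\<Prod>z\<in>D - {x}. M - 1)"
      by (rule prod.cong) (use M2 in auto)
    moreover have "card (X - D) = card X - card D" using finX DX finite_subset by (metis card_Diff_subset)
    moreover have "card (D - {x}) = card D - 1" using xD by simp
    ultimately show ?thesis by simp
  qed
  have cN: "card N = M ^ card X - card G"
    unfolding NG using finX GS by (simp add: card_Diff_subset card_PiE finite_PiE finite_subset)
  have Dle: "card D \<le> card X" using finX DX card_mono by blast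
  have finD: "finite D" using finite_subset[OF DX finX] .
  then have D1: "card D > 0" using xD card_gt_0_iff by blast
  have "real (card G) = real M ^ card X * (real (M-1) ^ (card D - 1) / real M ^ card D)"
  proof -
    have "real M ^ card X = real M ^ (card X - card D) * real M ^ card D"
      using Dle by (metis le_add_diff_inverse2 power_add)
    then show ?thesis unfolding cG using M2 by (simp add: field_simps)
  qed
  moreover have "card G \<le> M ^ card X"
    using card_mono[OF _ GS] finX by (simp add: card_PiE finite_PiE)
  ultimately have "real (card N) = real M ^ card X * (1 - real (M-1) ^ (card D - 1) / real M ^ card D)"
    unfolding cN by (simp add: of_nat_diff algebra_simps)
  then show ?thesis unfolding cA cA2 cO by (simp add: power_mult_distrib power_mult[symmetric] mult.commute)
qed



lemma one_minus_pow_ge: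
  fixes M :: nat assumes "M \<ge> 2"
  shows "(1 - 1 / real M) ^ (M - 1) \<ge> exp (-1)"
proof -
  define t where "t = 1 / (real M - 1)"
  have t0: "t > 0" using assms unfolding t_def by simp
  have "(1 + t) ^ (M - 1) \<le> exp t ^ (M - 1)"
    using t0 by (intro power_mono) (auto simp: add.commute)
  also have "\<dots> = exp (t * real (M - 1))" by (simp add: exp_of_nat_mult[symmetric] mult.commute)
  also have "t * real (M - 1) = 1" using assms unfolding t_def by (simp add: of_nat_diff)
  finally have h: "(1 + t) ^ (M - 1) \<le> exp 1" by simp
  have eq: "1 - 1 / real M = 1 / (1 + t)" using assms unfolding t_def by (simp add: field_simps)
  have "(1 - 1 / real M) ^ (M - 1) = 1 / (1 + t) ^ (M - 1)" unfolding eq by (simp add: power_one_over)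
  also have "\<dots> \<ge> 1 / exp 1" using h t0 by (intro divide_left_mono) auto
  finally show ?thesis by (simp add: exp_minus field_simps)
qed

lemma prob_bound:
  fixes \<Delta> c k :: nat
  assumes D41: "\<Delta> \<ge> 41" and c1: "1 \<le> c" and c2: "c \<le> 2 * \<Delta>"
    and kb: "real k \<ge> 27 * real \<Delta> * ln (real \<Delta>)"
  shows "(1 - real (2*\<Delta>-1) ^ (c - 1) / real (2*\<Delta>) ^ c) ^ k \<le> 1 / real \<Delta> ^ 4"
proof -
  define M where "M = 2 * \<Delta>"
  have M2: "M \<ge> 2" using D41 unfolding M_def by simp
  define a where "a = real (M-1) ^ (c - 1) / real M ^ c"
  have Mpos: "real M > 0" using M2 by simp
  have a_eq: "a = (1 / real M) * (1 - 1 / real M) ^ (c - 1)"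
  proof -
    have "real M ^ c = real M * real M ^ (c - 1)" using c1 by (metis Suc_diff_le diff_Suc_1 power_Suc)
    moreover have "1 - 1 / real M = real (M - 1) / real M" using M2 by (simp add: of_nat_diff field_simps)
    ultimately show ?thesis unfolding a_def by (simp add: power_divide)
  qed
  have b0: "0 \<le> 1 - 1 / real M" "1 - 1 / real M \<le> 1" using M2 by auto
  have "(1 - 1 / real M) ^ (c - 1) \<ge> (1 - 1 / real M) ^ (M - 1)"
    using c2 b0 unfolding M_def by (intro power_decreasing) auto
  then have "(1 - 1 / real M) ^ (c - 1) \<ge> exp (-1)" using one_minus_pow_ge[OF M2] by linarith
  moreover have "exp (-1) \<ge> (1/3::real)"
    using exp_le by (simp add: exp_minus field_simps)
  ultimately have p3: "(1 - 1 / real M) ^ (c - 1) \<ge> 1/3" by linarith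
  have alow: "a \<ge> 1 / (6 * real \<Delta>)"
  proof -
    have "a \<ge> (1 / real M) * (1/3)" unfolding a_eq using p3 Mpos by (intro mult_left_mono) auto
    then show ?thesis unfolding M_def by simp
  qed
  have ale: "a \<le> 1"
  proof -
    have "(1 - 1 / real M) ^ (c - 1) \<le> 1" using b0 by (simp add: power_le_one)
    then have "a \<le> 1 / real M" unfolding a_eq using Mpos by (simp add: divide_right_mono)
    also have "\<dots> \<le> 1" using M2 by simp
    finally show ?thesis .
  qed
  have "(1 - a) ^ k \<le> exp (-a) ^ k"
    using ale by (intro power_mono) (auto simp: exp_ge_add_one_self[of "-a", simplified])
  also have "\<dots> = exp (- (a * real k))" by (simp add: exp_of_nat_mult[symmetric] mult.commute)
  also have "\<dots> \<le> exp (- (4 * ln (real \<Delta>)))"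
  proof -
    have lnpos: "ln (real \<Delta>) \<ge> 0" using D41 by simp
    have "1 / (6 * real \<Delta>) \<ge> 0" by simp
    then have a0: "a \<ge> 0" using alow by linarith
    have "a * real k \<ge> (1 / (6 * real \<Delta>)) * (27 * real \<Delta> * ln (real \<Delta>))"
      using alow kb lnpos D41 a0 by (intro mult_mono) auto
    moreover have "(1 / (6 * real \<Delta>)) * (27 * real \<Delta> * ln (real \<Delta>)) = 27/6 * ln (real \<Delta>)"
      using D41 by (simp add: field_simps)
    ultimately have "a * real k \<ge> 4 * ln (real \<Delta>)" using lnpos by linarith
    then show ?thesis by simp
  qed
  also have "\<dots> = 1 / real \<Delta> ^ 4"
  proof -
    have "exp (4 * ln (real \<Delta>)) = real \<Delta> ^ 4"
    proof -
      have pos: "real \<Delta> > 0" using D41 by simp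
      have "ln (real \<Delta> ^ 4) = 4 * ln (real \<Delta>)" using ln_realpow[of "real \<Delta>" 4] pos by simp
      then have "exp (4 * ln (real \<Delta>)) = exp (ln (real \<Delta> ^ 4))" by simp
      also have "\<dots> = real \<Delta> ^ 4" using pos by simp
      finally show ?thesis .
    qed
    then show ?thesis by (simp add: exp_minus divide_inverse)
  qed
  finally show ?thesis unfolding a_def M_def .
qed



definition nbr :: "'a set set \<Rightarrow> 'a \<Rightarrow> 'a set" where
  "nbr E v = {u. {v, u} \<in> E}"

lemma triangle_pair:
  assumes "triangle E a b c" "u \<in> {a, b, c}" "v \<in> {a, b, c}" "u \<noteq> v"
  shows "{u, v} \<in> E"
proof -
  have "{u, v} = {a, b} \<or> {u, v} = {b, c} \<or> {u, v} = {a, c}"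
    using assms(2,3,4) by (auto simp: doubleton_eq_iff)
  moreover have "{a, b} \<in> E" "{b, c} \<in> E" "{a, c} \<in> E" using assms(1) unfolding triangle_def by auto
  ultimately show ?thesis by (elim disjE) simp_all
qed

theorem theorem3p2:
  fixes V :: "'a set" and E :: "'a set set" and Y :: "'a set" and \<Delta> :: nat
  assumes "\<Delta> \<ge> 41"
    and "simple_graph V E"
    and "V \<noteq> {}"
    and "max_degree V E = \<Delta>"
    and "independent_set V E Y"
  shows "\<exists>P :: nat \<Rightarrow> 'a set set.
           (\<Union>i<nat \<lceil>27 * real \<Delta> * ln (real \<Delta>)\<rceil>. P i) = cut_edges V E Y \<and>
           (\<forall>i<nat \<lceil>27 * real \<Delta> * ln (real \<Delta>)\<rceil>. \<forall>j<nat \<lceil>27 * real \<Delta> * ln (real \<Delta>)\<rceil>.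
               i \<noteq> j \<longrightarrow> P i \<inter> P j = {}) \<and>
           (\<forall>i<nat \<lceil>27 * real \<Delta> * ln (real \<Delta>)\<rceil>. good_set E (P i))"
proof -
  note D41 = assms(1)
  define k where "k = nat \<lceil>27 * real \<Delta> * ln (real \<Delta>)\<rceil>"
  have kb: "real k \<ge> 27 * real \<Delta> * ln (real \<Delta>)" unfolding k_def by linarith
  have finV: "finite V" using assms(2) unfolding simple_graph_def by auto
  have EV: "\<And>e. e \<in> E \<Longrightarrow> e \<subseteq> V" using assms(2) unfolding simple_graph_def by auto
  have finE: "finite E"
  proof -
    have "E \<subseteq> Pow V" using EV by auto
    then show ?thesis by (rule finite_subset) (simp add: finV)
  qed
  have YV: "Y \<subseteq> V" and indep: "\<And>a b. a \<in> Y \<Longrightarrow> b \<in> Y \<Longrightarrow> {a, b} \<notin> E"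
    using assms(5) unfolding independent_set_def by auto
  have degle: "degree E v \<le> \<Delta>" for v
  proof (cases "v \<in> V")
    case True
    then show ?thesis using assms(4) finV unfolding max_degree_def by (metis Max_ge finite_imageI imageI)
  next
    case False
    then have "{e\<in>E. v \<in> e} = {}" using EV by auto
    then have "degree E v = 0" unfolding degree_def by (simp only: card.empty)
    then show ?thesis by simp
  qed
  have nbrV: "nbr E v \<subseteq> V" for v unfolding nbr_def using EV by auto
  have finN: "finite (nbr E v)" for v using finite_subset[OF nbrV finV] .
  have cardN: "card (nbr E v) \<le> \<Delta>" for v
  proof -
    have "inj_on (\<lambda>u. {v, u}) (nbr E v)" by (auto simp: inj_on_def doubleton_eq_iff)
    then have "card (nbr E v) = card ((\<lambda>u. {v, u}) ` nbr E v)" by (simp add: card_image)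
    also have "\<dots> \<le> card {e\<in>E. v \<in> e}"
      by (rule card_mono) (use finE in \<open>auto simp: nbr_def\<close>)
    also have "\<dots> \<le> \<Delta>" using degle[of v] unfolding degree_def .
    finally show ?thesis .
  qed
  have cardEv: "card {e\<in>E. v \<in> e} \<le> \<Delta>" for v using degle[of v] unfolding degree_def .
  define I where "I = cut_edges V E Y"
  have finI: "finite I" unfolding I_def cut_edges_def using finE by auto
  define X where "X = V - Y"
  have finX: "finite X" unfolding X_def using finV by auto
  define ye where "ye e = (SOME y. y \<in> e \<and> y \<in> Y)" for e :: "'a set"
  define xe where "xe e = (SOME x. x \<in> e \<and> x \<notin> Y)" for e :: "'a set"
  have ends0: "ye e \<in> Y \<and> xe e \<in> X \<and> e = {ye e, xe e} \<and> e \<in> E" if eI: "e \<in> I" for e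
  proof -
    obtain y x where yx: "y \<in> Y" "x \<in> V - Y" "e = {y, x}" "e \<in> E"
      using eI unfolding I_def cut_edges_def by blast
    have "ye e = y" unfolding ye_def
      by (rule some_equality) (use yx in auto)
    moreover have "xe e = x" unfolding xe_def
      by (rule some_equality) (use yx in auto)
    ultimately show ?thesis using yx unfolding X_def by auto
  qed
  have e_eq: "e = {ye e, xe e}" if "e \<in> I" for e using ends0[OF that] by blast
  have ends: "ye e \<in> Y \<and> xe e \<in> X \<and> ye e \<in> e \<and> xe e \<in> e \<and> e \<in> E \<and> {ye e, xe e} \<in> E"
    if "e \<in> I" for e
  proof -
    have h: "ye e \<in> Y" "xe e \<in> X" "e \<in> E" using ends0[OF that] by blast+
    have e': "{ye e, xe e} = e" using e_eq[OF that] by (rule sym)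
    have "ye e \<in> {ye e, xe e}" by simp
    then have 1: "ye e \<in> e" by (simp only: e')
    have "xe e \<in> {ye e, xe e}" by simp
    then have 2: "xe e \<in> e" by (simp only: e')
    note 1 2
    moreover have "{ye e, xe e} \<in> E" using h(3) by (simp only: e')
    ultimately show ?thesis using h by blast
  qed
  define D where "D e = insert (xe e) (nbr E (ye e) \<union> (nbr E (xe e) - Y))" for e
  have DX: "D e \<subseteq> X" if "e \<in> I" for e
  proof -
    have "nbr E (ye e) \<subseteq> X"
    proof
      fix u assume "u \<in> nbr E (ye e)"
      then have "{ye e, u} \<in> E" "u \<in> V" using nbrV unfolding nbr_def by auto
      moreover have "u \<notin> Y" using indep ends[OF that] calculation by blast
      ultimately show "u \<in> X" unfolding X_def by auto
    qed
    moreover have "nbr E (xe e) - Y \<subseteq> X" using nbrV unfolding X_def by auto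
    ultimately show ?thesis unfolding D_def using ends[OF that] by auto
  qed
  have xD: "xe e \<in> D e" for e unfolding D_def by auto
  have cardD: "card (D e) \<le> 2 * \<Delta>" if "e \<in> I" for e
  proof -
    have "{ye e, xe e} \<in> E" using ends[OF that] by blast
    then have "xe e \<in> nbr E (ye e)" unfolding nbr_def by simp
    then have "D e = nbr E (ye e) \<union> (nbr E (xe e) - Y)" unfolding D_def by auto
    then have "card (D e) \<le> card (nbr E (ye e)) + card (nbr E (xe e) - Y)"
      by (simp add: card_Un_le)
    also have "\<dots> \<le> \<Delta> + \<Delta>" using cardN[of "ye e"] cardN[of "xe e"] card_mono[OF finN Diff_subset, of "xe e" Y]
      by linarith
    finally show ?thesis by simp
  qed
  have D1: "card (D e) \<ge> 1" if "e \<in> I" for e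
  proof -
    have "finite (D e)" using finite_subset[OF DX[OF that] finX] .
    then have "card (D e) > 0" using xD[of e] card_gt_0_iff by blast
    then show ?thesis by simp
  qed
  define M where "M = 2 * \<Delta>"
  define R where "R = PiE {..<k} (\<lambda>_. {..<M})"
  define good where "good (w :: 'a \<Rightarrow> nat \<Rightarrow> nat) e (i::nat) \<longleftrightarrow> w (xe e) i = 0 \<and> (\<forall>z\<in>D e - {xe e}. w z i \<noteq> 0)" for w e i
  define A where "A e = {w\<in>PiE X (\<lambda>_. R). \<forall>i<k. \<not> good w e i}" for e
  have "\<exists>w\<in>PiE X (\<lambda>_. R). \<forall>e\<in>I. w \<notin> A e"
  proof (rule lll[where sp = D and p = "1 / real \<Delta> ^ 4" and d = "3 * \<Delta> ^ 3"])
    show "finite X" by (rule finX)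
    show "finite R" unfolding R_def by (simp add: finite_PiE)
    show "R \<noteq> {}" unfolding R_def M_def using D41 by (simp add: PiE_eq_empty_iff lessThan_empty_iff)
    show "finite I" by (rule finI)
    show "A e \<subseteq> PiE X (\<lambda>_. R) \<and> D e \<subseteq> X \<and> dep X R (D e) (A e)" if "e \<in> I" for e
    proof (intro conjI)
      show "A e \<subseteq> PiE X (\<lambda>_. R)" unfolding A_def by auto
      show "D e \<subseteq> X" using DX[OF that] .
      show "dep X R (D e) (A e)" unfolding dep_def
      proof (intro ballI impI)
        fix w w' assume w: "w \<in> PiE X (\<lambda>_. R)" "w' \<in> PiE X (\<lambda>_. R)" and ag: "\<forall>c\<in>D e. w c = w' c"
        have "good w e i = good w' e i" for i
          unfolding good_def using ag xD[of e] by auto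
        then show "(w \<in> A e) = (w' \<in> A e)" unfolding A_def using w by auto
      qed
    qed
    show "real (card (A e)) \<le> 1 / real \<Delta> ^ 4 * real (card (PiE X (\<lambda>_. R)))" if "e \<in> I" for e
    proof -
      have "real (card (A e)) = (1 - real (M-1) ^ (card (D e) - 1) / real M ^ card (D e)) ^ k * real (card (PiE X (\<lambda>_. R)))"
        unfolding A_def good_def R_def
        by (rule event_card[OF finX DX[OF that] xD]) (use D41 M_def in simp)
      also have "\<dots> \<le> 1 / real \<Delta> ^ 4 * real (card (PiE X (\<lambda>_. R)))"
        unfolding M_def
        by (rule mult_right_mono[OF prob_bound[OF D41 D1[OF that] cardD[OF that] kb]]) simp
      finally show ?thesis .
    qed
    show "card {j\<in>I. D j \<inter> D e \<noteq> {}} \<le> 3 * \<Delta> ^ 3" if "e \<in> I" for e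
    proof -
      define B where "B z = (\<Union>w\<in>insert z (nbr E z). {f\<in>E. w \<in> f})" for z
      have sub: "{j\<in>I. D j \<inter> D e \<noteq> {}} \<subseteq> (\<Union>z\<in>D e. B z)"
      proof
        fix f assume "f \<in> {j\<in>I. D j \<inter> D e \<noteq> {}}"
        then obtain z where f: "f \<in> I" and z: "z \<in> D f" "z \<in> D e" by auto
        note fe = ends[OF f]
        have "\<exists>w\<in>insert z (nbr E z). w \<in> f"
        proof -
          have "z = xe f \<or> z \<in> nbr E (ye f) \<or> z \<in> nbr E (xe f)" using z(1) unfolding D_def by auto
          then show ?thesis
          proof (elim disjE)
            assume "z = xe f" then show ?thesis using fe by auto
          next
            assume "z \<in> nbr E (ye f)"
            then have "ye f \<in> nbr E z" unfolding nbr_def by (simp add: insert_commute)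
            then show ?thesis using fe by blast
          next
            assume "z \<in> nbr E (xe f)"
            then have "xe f \<in> nbr E z" unfolding nbr_def by (simp add: insert_commute)
            then show ?thesis using fe by blast
          qed
        qed
        then show "f \<in> (\<Union>z\<in>D e. B z)" unfolding B_def using fe z(2) by blast
      qed
      have finDe: "finite (D e)" using finite_subset[OF DX[OF that] finX] .
      have cB: "card (B z) \<le> (\<Delta> + 1) * \<Delta>" for z
      proof -
        have "card (B z) \<le> (\<Sum>w\<in>insert z (nbr E z). card {f\<in>E. w \<in> f})"
          unfolding B_def by (rule card_UN_le) (simp add: finN)
        also have "\<dots> \<le> card (insert z (nbr E z)) * \<Delta>"
          using sum_bounded_above[where K=\<Delta> and f="\<lambda>w. card {f\<in>E. w \<in> f}" and A="insert z (nbr E z)"] cardEv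
          by simp
        also have "\<dots> \<le> (\<Delta> + 1) * \<Delta>"
          using card_insert_le_m1 cardN[of z] finN[of z]
          by (intro mult_right_mono) (simp_all add: card_insert_if)
        finally show ?thesis .
      qed
      have finBz: "finite (B z)" for z
      proof -
        have "B z \<subseteq> E" unfolding B_def by blast
        then show ?thesis using finite_subset finE by blast
      qed
      have finB: "finite (\<Union>z\<in>D e. B z)" using finDe finBz by blast
      have "card {j\<in>I. D j \<inter> D e \<noteq> {}} \<le> card (\<Union>z\<in>D e. B z)"
        by (rule card_mono[OF finB sub])
      also have "\<dots> \<le> (\<Sum>z\<in>D e. card (B z))" by (rule card_UN_le[OF finDe])
      also have "\<dots> \<le> card (D e) * ((\<Delta> + 1) * \<Delta>)"
        using sum_bounded_above[where K="(\<Delta> + 1) * \<Delta>" and f="\<lambda>z. card (B z)" and A="D e"] cB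
        by simp
      also have "\<dots> \<le> (2 * \<Delta>) * ((\<Delta> + 1) * \<Delta>)" using cardD[OF that] by (intro mult_right_mono) auto
      also have "\<dots> \<le> 3 * \<Delta> ^ 3"
      proof -
        have "2 * \<Delta> \<le> \<Delta> * \<Delta>" using D41 by (intro mult_right_mono) auto
        then have "(2 * \<Delta>) * ((\<Delta> + 1) * \<Delta>) = 2 * \<Delta>^3 + (2 * \<Delta>) * \<Delta>" by (simp add: algebra_simps power3_eq_cube)
        also have "\<dots> \<le> 2 * \<Delta>^3 + (\<Delta> * \<Delta>) * \<Delta>" using mult_right_mono[OF \<open>2 * \<Delta> \<le> \<Delta> * \<Delta>\<close>, of \<Delta>] by simp
        also have "\<dots> = 3 * \<Delta>^3" by (simp add: power3_eq_cube)
        finally show ?thesis .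
      qed
      finally show ?thesis .
    qed
    show "4 * (1 / real \<Delta> ^ 4) * real (3 * \<Delta> ^ 3) \<le> 1"
    proof -
      have pos: "real \<Delta> > 0" using D41 by simp
      have "4 * (1 / real \<Delta> ^ 4) * real (3 * \<Delta> ^ 3) = 12 / real \<Delta>"
        using pos by (simp add: field_simps power_eq_if)
      also have "\<dots> \<le> 1" using D41 by simp
      finally show ?thesis .
    qed
    show "0 \<le> 1 / real \<Delta> ^ 4" by simp
    show "1 \<le> 3 * \<Delta> ^ 3" using D41 by simp
  qed
  then obtain w where w: "w \<in> PiE X (\<lambda>_. R)" and wA: "\<forall>e\<in>I. w \<notin> A e" by blast
  have ex: "\<exists>i<k. good w e i" if "e \<in> I" for e using wA that w unfolding A_def by auto
  define c where "c e = (SOME i. i < k \<and> good w e i)" for e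
  have c: "c e < k \<and> good w e (c e)" if "e \<in> I" for e
    unfolding c_def using someI_ex[OF ex[OF that]] .
  define P where "P i = {e\<in>I. c e = i}" for i
  have PU: "(\<Union>i<k. P i) = I" unfolding P_def using c by auto
  have Pdisj: "\<forall>i<k. \<forall>j<k. i \<noteq> j \<longrightarrow> P i \<inter> P j = {}" unfolding P_def by auto
  have Pgood: "good_set E (P i)" if "i < k" for i
    unfolding good_set_def
  proof (intro conjI ballI impI)
    show "P i \<subseteq> E" unfolding P_def using ends by auto
    fix e f assume e: "e \<in> P i" and f: "f \<in> P i" and ne: "e \<noteq> f"
    have eI: "e \<in> I" and fI: "f \<in> I" using e f unfolding P_def by auto
    have ge: "good w e i" and gf: "good w f i" using c[OF eI] c[OF fI] e f unfolding P_def by auto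
    note ee = ends[OF eI] and ff = ends[OF fI]
    define y where "y = ye e" define x where "x = xe e" define y' where "y' = ye f" define x' where "x' = xe f"
    have yY: "y \<in> Y" "y' \<in> Y" and xX: "x \<in> X" "x' \<in> X" and eq: "e = {y, x}" "f = {y', x'}"
      using ee ff e_eq[OF eI] e_eq[OF fI] unfolding y_def x_def y'_def x'_def by blast+
    have xnY: "x \<notin> Y" "x' \<notin> Y" using xX unfolding X_def by auto
    show "\<not> ((e \<inter> f = {} \<and> (\<exists>u\<in>e. \<exists>v\<in>f. {u, v} \<in> E)) \<or>
           (\<exists>a b c. triangle E a b c \<and> e \<subseteq> {a, b, c} \<and> f \<subseteq> {a, b, c}))"
    proof (cases "x = x'")
      case True
      then have yy: "y \<noteq> y'" using ne eq by auto
      have "e \<inter> f \<noteq> {}" using eq True by auto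
      moreover have "\<not> (triangle E a b cc \<and> e \<subseteq> {a, b, cc} \<and> f \<subseteq> {a, b, cc})" for a b cc
      proof
        assume h: "triangle E a b cc \<and> e \<subseteq> {a, b, cc} \<and> f \<subseteq> {a, b, cc}"
        then have "{y, y'} \<in> E" using triangle_pair[of E a b cc y y'] yy eq by auto
        then show False using indep yY by blast
      qed
      ultimately show ?thesis by blast
    next
      case False
      have w0: "w x i = 0" "w x' i = 0" using ge gf unfolding good_def x_def x'_def by auto
      have nx'e: "x' \<notin> D e - {x}"
      proof
        assume "x' \<in> D e - {x}"
        then have "w x' i \<noteq> 0" using ge unfolding good_def x_def by blast
        then show False using w0 by simp
      qed
      have nxf: "x \<notin> D f - {x'}"
      proof
        assume "x \<in> D f - {x'}"
        then have "w x i \<noteq> 0" using gf unfolding good_def x'_def by blast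
        then show False using w0 by simp
      qed
      have n1: "{y, x'} \<notin> E" using nx'e False unfolding D_def nbr_def y_def x_def by auto
      have n2: "{x, x'} \<notin> E" using nx'e False xnY unfolding D_def nbr_def y_def x_def by auto
      have n3: "{y', x} \<notin> E" using nxf False unfolding D_def nbr_def y'_def x'_def by auto
      have n4: "{y, y'} \<notin> E" using indep yY by blast
      have "\<not> (\<exists>u\<in>e. \<exists>v\<in>f. {u, v} \<in> E)"
        using n1 n2 n3 n4 unfolding eq by (auto simp: insert_commute)
      moreover have "\<not> (triangle E a b cc \<and> e \<subseteq> {a, b, cc} \<and> f \<subseteq> {a, b, cc})" for a b cc
      proof
        assume h: "triangle E a b cc \<and> e \<subseteq> {a, b, cc} \<and> f \<subseteq> {a, b, cc}"
        then have "{x, x'} \<in> E" using triangle_pair[of E a b cc x x'] False eq by auto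
        then show False using n2 by blast
      qed
      ultimately show ?thesis by blast
    qed
  qed
  show ?thesis
    apply (rule exI[of _ P])
    using PU Pdisj Pgood unfolding k_def I_def by blast
qed

end
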